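(* Let $\mathbb{E}$ be a Euclidean space and let $\mathcal{X},\mathcal{Y}\subset\mathbb{E}$ be sets that are both $C^{(2)}$-manifolds around a point $z$, where $z$ is an isolated point of $\mathcal{X}\cap\mathcal{Y}$ and the intersection is transversal at $z$, i.e. $N_{\mathcal{X}}(z)\cap N_{\mathcal{Y}}(z)=\{0\}$. Then there is an open neighborhood $W$ of $z$ such that for each $x\in\mathcal{X}\cap W$ the affine set $x+T_{\mathcal{X}}(x)$ meets $\mathcal{Y}\cap W$ in exactly one point, denoted $y(x)$. Let $R\colon\mathcal{Y}\to\mathcal{X}$ be a Lipschitz map with $R(z)=z$. Then, starting from any point $x\in\mathcal{X}$ sufficiently near $z$, the iteration $$x\leftarrow R\big(y(x)\big)$$ converges quadratically to $z$.
   Context: A set $\mathcal{X}\subset\mathbb{E}$ is a $C^{(r)}$-manifold around $z\in\mathcal{X}$ if there is a $C^{(r)}$-smooth map $F\colon\mathbb{E}\to\mathbb{R}^m$ with surjective derivative $DF(z)$ such that $F^{-1}(0)$ is a neighborhood of $z$ in $\mathcal{X}$. The tangent space $T_{\mathcal{X}}(x)$ at points $x\in\mathcal{X}$ near $z$ is the null space of the derivative of such a defining map at $x$, and the normal space $N_{\mathcal{X}}(x)$ is its orthogonal complement. Quadratic convergence means the iterates are well defined, converge to $z$, and satisfy $|x_{\text{new}}-z|=O(|x-z|^2)$. *)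

theory Defs
  imports "HOL-Analysis.Analysis"
begin

definition C2_map :: "('a::euclidean_space \<Rightarrow> 'm::euclidean_space) \<Rightarrow> bool" where
  "C2_map F \<longleftrightarrow> (\<exists>(DF :: 'a \<Rightarrow> 'a \<Rightarrow>\<^sub>L 'm) (D2 :: 'a \<Rightarrow> 'a \<Rightarrow>\<^sub>L ('a \<Rightarrow>\<^sub>L 'm)).
      (\<forall>x. (F has_derivative blinfun_apply (DF x)) (at x)) \<and>
      (\<forall>x. (DF has_derivative blinfun_apply (D2 x)) (at x)) \<and>
      continuous_on UNIV D2)"

definition C2_defining_map ::
  "('a::euclidean_space \<Rightarrow> 'm::euclidean_space) \<Rightarrow> 'a set \<Rightarrow> 'a \<Rightarrow> bool" where
  "C2_defining_map F X z \<longleftrightarrow>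
     z \<in> X \<and> C2_map F \<and> surj (frechet_derivative F (at z)) \<and>
     F -` {0} \<subseteq> X \<and> (\<exists>U. open U \<and> z \<in> U \<and> X \<inter> U \<subseteq> F -` {0})"

definition tangent_space :: "('a::euclidean_space \<Rightarrow> 'm::euclidean_space) \<Rightarrow> 'a \<Rightarrow> 'a set" where
  "tangent_space F x = {v. frechet_derivative F (at x) v = 0}"

definition normal_space :: "('a::euclidean_space \<Rightarrow> 'm::euclidean_space) \<Rightarrow> 'a \<Rightarrow> 'a set" where
  "normal_space F x = orthogonal_comp (tangent_space F x)"

end

theory Submission
  imports Defs
begin

lemma blin_lip:
  fixes DF :: "'a::euclidean_space \<Rightarrow> ('a \<Rightarrow>\<^sub>L 'm::euclidean_space)"
  assumes d: "\<And>x. (DF has_derivative blinfun_apply (D2 x)) (at x)" and c: "continuous_on UNIV D2"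
  obtains B where "B \<ge> 0" "\<And>a b. a \<in> cball z 1 \<Longrightarrow> b \<in> cball z 1 \<Longrightarrow> norm (DF a - DF b) \<le> B * norm (a - b)"
proof -
  have "compact (D2 ` cball z 1)"
    by (rule compact_continuous_image[OF continuous_on_subset[OF c] compact_cball]) auto
  then obtain B where B: "\<forall>y \<in> D2 ` cball z 1. norm y \<le> B"
    using compact_imp_bounded bounded_iff by metis
  have "norm (D2 z) \<le> B" using B by auto
  then have B0: "B \<ge> 0" using norm_ge_zero[of "D2 z"] by linarith
  show thesis
  proof (rule that[OF B0])
    fix a b assume a: "a \<in> cball z 1" and b: "b \<in> cball z 1"
    show "norm (DF a - DF b) \<le> B * norm (a - b)"
    proof (rule differentiable_bound[where S="cball z 1" and f'="\<lambda>x. blinfun_apply (D2 x)"])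
      show "convex (cball z 1)" by simp
      show "(DF has_derivative blinfun_apply (D2 x)) (at x within cball z 1)" for x
        using d has_derivative_at_withinI by blast
      show "onorm (blinfun_apply (D2 x)) \<le> B" if "x \<in> cball z 1" for x
        using B that by (simp add: norm_blinfun.rep_eq[symmetric])
    qed (use a b in auto)
  qed
qed

lemma taylor2:
  fixes F :: "'a::euclidean_space \<Rightarrow> 'm::euclidean_space"
  assumes dF: "\<And>x. (F has_derivative blinfun_apply (DF x)) (at x)"
   and lip: "\<And>a b. a \<in> cball z 1 \<Longrightarrow> b \<in> cball z 1 \<Longrightarrow> norm (DF a - DF b) \<le> B * norm (a - b)"
   and B0: "B \<ge> 0"
   and x: "x \<in> cball z 1"
  shows "norm (F z - F x - blinfun_apply (DF x) (z - x)) \<le> B * (norm (x - z))\<^sup>2"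
proof -
  let ?S = "closed_segment x z"
  have sub: "?S \<subseteq> cball z 1"
    by (rule closed_segment_subset) (use x in auto)
  have "norm (F z - F x - blinfun_apply (DF x) (z - x)) \<le> norm (z - x) * (B * norm (z - x))"
  proof (rule differentiable_bound_linearization[where S="?S" and f'="\<lambda>y. blinfun_apply (DF y)"])
    show "x + t *\<^sub>R (z - x) \<in> ?S" if "t \<in> {0..1}" for t
      using that unfolding in_segment
      by (rule_tac x=t in exI) (auto simp: algebra_simps)
    show "(F has_derivative blinfun_apply (DF y)) (at y within ?S)" for y
      using dF has_derivative_at_withinI by blast
    show "onorm (blinfun_apply (DF y) - blinfun_apply (DF x)) \<le> B * norm (z - x)" if y: "y \<in> ?S" for y
    proof -
      have "onorm (blinfun_apply (DF y) - blinfun_apply (DF x)) = norm (DF y - DF x)"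
        by (simp add: norm_blinfun.rep_eq minus_blinfun.rep_eq fun_diff_def)
      also have "\<dots> \<le> B * norm (y - x)" using lip sub y x by auto
      also have "\<dots> \<le> B * norm (z - x)"
        using dist_in_closed_segment[OF y] B0 by (simp add: dist_norm mult_left_mono norm_minus_commute)
      finally show ?thesis .
    qed
    show "x \<in> ?S" by simp
  qed
  then show ?thesis by (simp add: power2_eq_square norm_minus_commute mult_ac)
qed

lemma lin_at_z:
  fixes G :: "'a::euclidean_space \<Rightarrow> 'm::euclidean_space"
  assumes dG: "\<And>x. (G has_derivative blinfun_apply (DG x)) (at x)"
   and lip: "\<And>a b. a \<in> cball z 1 \<Longrightarrow> b \<in> cball z 1 \<Longrightarrow> norm (DG a - DG b) \<le> B * norm (a - b)"
   and B0: "B \<ge> 0" and r1: "r \<le> 1"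
   and y1: "y1 \<in> ball z r" and y2: "y2 \<in> ball z r"
  shows "norm (G y1 - G y2 - blinfun_apply (DG z) (y1 - y2)) \<le> norm (y1 - y2) * (B * r)"
proof (rule differentiable_bound_linearization[where S="ball z r" and f'="\<lambda>y. blinfun_apply (DG y)"])
  show "y2 + t *\<^sub>R (y1 - y2) \<in> ball z r" if "t \<in> {0..1}" for t
  proof -
    have "y2 + t *\<^sub>R (y1 - y2) = (1 - t) *\<^sub>R y2 + t *\<^sub>R y1" by (simp add: algebra_simps)
    moreover have "(1 - t) *\<^sub>R y2 + t *\<^sub>R y1 \<in> ball z r"
      using convexD[OF convex_ball y2 y1, of "1-t" t] that by auto
    ultimately show ?thesis by simp
  qed
  show "(G has_derivative blinfun_apply (DG y)) (at y within ball z r)" for y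
    using dG has_derivative_at_withinI by blast
  show "onorm (blinfun_apply (DG y) - blinfun_apply (DG z)) \<le> B * r" if y: "y \<in> ball z r" for y
  proof -
    have "onorm (blinfun_apply (DG y) - blinfun_apply (DG z)) = norm (DG y - DG z)"
      by (simp add: norm_blinfun.rep_eq minus_blinfun.rep_eq fun_diff_def)
    also have "\<dots> \<le> B * norm (y - z)" using lip y r1 by auto
    also have "\<dots> \<le> B * r"
      using y B0 by (simp add: dist_norm mult_left_mono norm_minus_commute)
    finally show ?thesis .
  qed
  have "0 \<le> dist z y1" by simp
  then have "0 < r" using y1 unfolding mem_ball by linarith
  then show "z \<in> ball z r" by simp
qed

lemma open_map_pt:
  fixes f :: "'a::euclidean_space \<Rightarrow> 'b::euclidean_space"
  assumes c: "continuous_on UNIV f" and d: "(f has_derivative f') (at x)" and s: "surj f'" and e: "e > 0"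
  shows "\<exists>\<eta>>0. ball (f x) \<eta> \<subseteq> f ` ball x e"
proof -
  have lf: "linear f'" using d has_derivative_linear by blast
  obtain g where g: "linear g" "f' \<circ> g = id"
    using real_vector.linear_surjective_right_inverse[OF lf s] by blast
  have fi: "f x \<in> interior (f ` ball x e)"
    by (rule sussmann_open_mapping[where S=UNIV and g'=g])
       (use c d g e in \<open>auto simp: linear_conv_bounded_linear\<close>)
  have oi: "open (interior (f ` ball x e))" by simp
  obtain \<eta> where "\<eta> > 0" "ball (f x) \<eta> \<subseteq> interior (f ` ball x e)"
    by (rule openE[OF oi fi])
  then show ?thesis using interior_subset by blast
qed


lemma msurj:
  fixes A :: "'a::euclidean_space \<Rightarrow>\<^sub>L 'n::euclidean_space" and B :: "'a \<Rightarrow>\<^sub>L 'm::euclidean_space"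
  assumes sA: "surj (blinfun_apply A)" and sB: "surj (blinfun_apply B)"
    and tr: "orthogonal_comp {v. blinfun_apply A v = 0} \<inter> orthogonal_comp {v. blinfun_apply B v = 0} = {0}"
  shows "surj (\<lambda>v. (blinfun_apply A v, blinfun_apply B v))"
proof (rule ccontr)
  let ?M = "\<lambda>v. (blinfun_apply A v, blinfun_apply B v)"
  assume ns: "\<not> surj ?M"
  have lM: "linear ?M" by (intro bounded_linear.linear bounded_linear_Pair blinfun.bounded_linear_right)
  have sp: "span (range ?M) = range ?M"
    using lM by (simp add: span_eq_iff subspace_UNIV linear_subspace_image)
  have "range ?M \<subset> UNIV" using ns by (simp add: psubset_eq)
  then have "span (range ?M) \<subset> span UNIV" by (simp only: sp span_UNIV)
  then obtain w where w: "w \<noteq> 0" "\<And>y. y \<in> span (range ?M) \<Longrightarrow> orthogonal w y"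
    by (rule orthogonal_to_subspace_exists_gen) auto
  obtain p q where pq: "w = (p, q)" by (cases w)
  have orth: "p \<bullet> blinfun_apply A h + q \<bullet> blinfun_apply B h = 0" for h
    using w(2)[of "?M h"] sp by (auto simp: pq orthogonal_def inner_Pair)
  have lA: "linear (blinfun_apply A)" and lB: "linear (blinfun_apply B)"
    by (simp_all add: bounded_linear.linear blinfun.bounded_linear_right)
  define u where "u = adjoint (blinfun_apply A) p"
  define u' where "u' = adjoint (blinfun_apply B) q"
  have hu: "h \<bullet> u = blinfun_apply A h \<bullet> p" for h unfolding u_def by (rule adjoint_works[OF lA])
  have hu': "h \<bullet> u' = blinfun_apply B h \<bullet> q" for h unfolding u'_def by (rule adjoint_works[OF lB])
  have "(u + u') \<bullet> (u + u') = (u + u') \<bullet> u + (u + u') \<bullet> u'" by (simp add: inner_add_right)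
  also have "\<dots> = 0" using orth[of "u+u'"] hu[of "u+u'"] hu'[of "u+u'"]
    by (simp only: inner_commute[of p] inner_commute[of q])
  finally have "u + u' = 0" by simp
  then have uu: "u' = - u" by (simp add: eq_neg_iff_add_eq_0 add.commute)
  have "u \<in> orthogonal_comp {v. blinfun_apply A v = 0}"
    by (auto simp: orthogonal_comp_def orthogonal_def hu)
  moreover have "u \<in> orthogonal_comp {v. blinfun_apply B v = 0}"
  proof -
    have "y \<bullet> u = - (y \<bullet> u')" for y by (simp add: uu)
    then show ?thesis by (auto simp: orthogonal_comp_def orthogonal_def hu')
  qed
  ultimately have u0: "u = 0" using tr by blast
  then have u'0: "u' = 0" using uu by simp
  obtain h where "blinfun_apply A h = p" using sA by (metis surjD)
  then have "p \<bullet> p = h \<bullet> u" by (simp add: hu)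
  then have p0: "p = 0" using u0 by simp
  obtain h' where "blinfun_apply B h' = q" using sB by (metis surjD)
  then have "q \<bullet> q = h' \<bullet> u'" by (simp add: hu')
  then have q0: "q = 0" using u'0 by simp
  show False using w(1) p0 q0 pq by (simp add: zero_prod_def)
qed

lemma minj:
  fixes F :: "'a::euclidean_space \<Rightarrow> 'm::euclidean_space" and G :: "'a \<Rightarrow> 'n::euclidean_space"
  assumes dF: "\<And>x. (F has_derivative blinfun_apply (DF x)) (at x)"
    and dG: "\<And>x. (G has_derivative blinfun_apply (DG x)) (at x)"
    and sM: "surj (\<lambda>v. (blinfun_apply (DG z) v, blinfun_apply (DF z) v))"
    and Fz: "F z = 0" and Gz: "G z = 0"
    and isol: "\<And>x. x \<in> ball z e \<Longrightarrow> F x = 0 \<Longrightarrow> G x = 0 \<Longrightarrow> x = z" and e: "e > 0"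
  shows "inj (\<lambda>v. (blinfun_apply (DG z) v, blinfun_apply (DF z) v))"
proof (rule ccontr)
  let ?M = "\<lambda>v. (blinfun_apply (DG z) v, blinfun_apply (DF z) v)"
  have lM: "linear ?M" by (intro bounded_linear.linear bounded_linear_Pair blinfun.bounded_linear_right)
  assume "\<not> inj ?M"
  then obtain v where v: "?M v = 0" "v \<noteq> 0" using linear_injective_0[OF lM] by auto
  define \<Phi> where "\<Phi> x = (G x, F x, v \<bullet> (x - z))" for x
  have d\<Phi>: "(\<Phi> has_derivative (\<lambda>h. (blinfun_apply (DG x) h, blinfun_apply (DF x) h, v \<bullet> h))) (at x)" for x
    unfolding \<Phi>_def by (intro has_derivative_Pair dG dF) (auto intro!: derivative_eq_intros)
  have c\<Phi>: "continuous_on UNIV \<Phi>"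
    by (meson continuous_at_imp_continuous_on d\<Phi> has_derivative_continuous)
  have s\<Phi>: "surj (\<lambda>h. (blinfun_apply (DG z) h, blinfun_apply (DF z) h, v \<bullet> h))"
  proof -
    have ex: "\<exists>h. (b, c, t) = (blinfun_apply (DG z) h, blinfun_apply (DF z) h, v \<bullet> h)" for b c t
    proof -
      obtain h0 where h0: "(b, c) = ?M h0" using surjD[OF sM, of "(b, c)"] by blast
      have v0: "blinfun_apply (DG z) v = 0" "blinfun_apply (DF z) v = 0"
        using v(1) by (simp_all add: zero_prod_def)
      have vv: "v \<bullet> v \<noteq> 0" using v(2) by simp
      define sc where "sc = (t - v \<bullet> h0) / (v \<bullet> v)"
      have e1: "blinfun_apply (DG z) (h0 + sc *\<^sub>R v) = b" "blinfun_apply (DF z) (h0 + sc *\<^sub>R v) = c"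
        using h0 v0 by (simp_all add: blinfun.add_right blinfun.scaleR_right)
      have e2: "v \<bullet> (h0 + sc *\<^sub>R v) = t"
        using vv by (simp add: sc_def inner_add_right)
      show ?thesis using e1 e2 by (intro exI[of _ "h0 + sc *\<^sub>R v"]) simp
    qed
    show ?thesis unfolding surj_def
    proof
      fix y :: "'n \<times> 'm \<times> real"
      obtain b c t where y: "y = (b, c, t)" by (cases y) auto
      show "\<exists>h. y = (blinfun_apply (DG z) h, blinfun_apply (DF z) h, v \<bullet> h)"
        unfolding y by (rule ex)
    qed
  qed
  obtain \<eta> where \<eta>: "\<eta> > 0" "ball (\<Phi> z) \<eta> \<subseteq> \<Phi> ` ball z e"
    using open_map_pt[OF c\<Phi> d\<Phi> s\<Phi> e] by blast
  have \<Phi>z: "\<Phi> z = (0, 0, 0)" by (simp add: \<Phi>_def Fz Gz)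
  have "(0, 0, \<eta>/2) \<in> ball (\<Phi> z) \<eta>" using \<eta>(1) by (simp add: \<Phi>z dist_norm)
  then have mem: "(0, 0, \<eta>/2) \<in> \<Phi> ` ball z e" by (rule subsetD[OF \<eta>(2)])
  obtain x where x: "(0, 0, \<eta>/2) = \<Phi> x" "x \<in> ball z e" using mem by (rule imageE)
  have Fx: "F x = 0" and Gx: "G x = 0" and vx: "v \<bullet> (x - z) = \<eta>/2"
    using x(1) unfolding \<Phi>_def by simp_all
  have "x = z" by (rule isol[OF x(2) Fx Gx])
  then show False using vx \<eta>(1) by simp
qed


lemma dH_lemma:
  fixes DF :: "'a::euclidean_space \<Rightarrow> ('a \<Rightarrow>\<^sub>L 'm::euclidean_space)" and G :: "'a \<Rightarrow> 'n::euclidean_space"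
  assumes dG: "\<And>x. (G has_derivative blinfun_apply (DG x)) (at x)"
  and dDF: "\<And>x. (DF has_derivative blinfun_apply (D2F x)) (at x)"
  shows "((\<lambda>p. (fst p, G (snd p), blinfun_apply (DF (fst p)) (snd p - fst p))) has_derivative
     (\<lambda>h. (fst h, blinfun_apply (DG (snd p)) (snd h), blinfun_apply (DF (fst p)) (snd h - fst h) + blinfun_apply (blinfun_apply (D2F (fst p)) (fst h)) (snd p - fst p)))) (at p)"
proof -
  have d1: "((\<lambda>p. DF (fst p)) has_derivative (\<lambda>h. blinfun_apply (D2F (fst p)) (fst h))) (at p)"
    by (rule has_derivative_compose[OF has_derivative_fst[OF has_derivative_ident] dDF])
  have d2: "((\<lambda>p. G (snd p)) has_derivative (\<lambda>h. blinfun_apply (DG (snd p)) (snd h))) (at p)"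
    by (rule has_derivative_compose[OF has_derivative_snd[OF has_derivative_ident] dG])
  have d3: "((\<lambda>p::'a\<times>'a. snd p - fst p) has_derivative (\<lambda>h. snd h - fst h)) (at p)"
    by (auto intro!: derivative_eq_intros)
  have d4: "((\<lambda>p. blinfun_apply (DF (fst p)) (snd p - fst p)) has_derivative
     (\<lambda>h. blinfun_apply (DF (fst p)) (snd h - fst h) + blinfun_apply (blinfun_apply (D2F (fst p)) (fst h)) (snd p - fst p))) (at p)"
    by (rule bounded_bilinear.FDERIV[OF bounded_bilinear_blinfun_apply d1 d3])
  show ?thesis
    by (intro has_derivative_Pair d2 d4 has_derivative_fst[OF has_derivative_ident])
qed

theorem corollary3p2:
  fixes X Y :: "'a::euclidean_space set" and z :: 'a
    and F :: "'a \<Rightarrow> 'm::euclidean_space" and G :: "'a \<Rightarrow> 'n::euclidean_space"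
    and R :: "'a \<Rightarrow> 'a" and L :: real
  assumes manX: "C2_defining_map F X z"
    and manY: "C2_defining_map G Y z"
    and isol: "\<exists>e>0. X \<inter> Y \<inter> ball z e = {z}"
    and transv: "normal_space F z \<inter> normal_space G z = {0}"
    and RY: "R ` Y \<subseteq> X" and Rlip: "L-lipschitz_on Y R" and Rz: "R z = z"
  shows "\<exists>W. open W \<and> z \<in> W \<and>
           (\<forall>x \<in> X \<inter> W. \<exists>!y. y \<in> Y \<inter> W \<and> y \<in> (\<lambda>v. x + v) ` tangent_space F x) \<and>
           (let yW = (\<lambda>x. THE y. y \<in> Y \<inter> W \<and> y \<in> (\<lambda>v. x + v) ` tangent_space F x)
            in \<exists>\<delta>>0. \<exists>C. \<forall>x0 \<in> X \<inter> ball z \<delta>.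
                 let s = (\<lambda>k. ((\<lambda>x. R (yW x)) ^^ k) x0) in
                 (\<forall>k. s k \<in> X \<inter> W) \<and> s \<longlonglongrightarrow> z \<and>
                 (\<forall>k. norm (s (Suc k) - z) \<le> C * (norm (s k - z))\<^sup>2))"
  proof -
  obtain DF D2F where dF: "\<And>x. (F has_derivative blinfun_apply (DF x)) (at x)"
    and dDF: "\<And>x. (DF has_derivative blinfun_apply (D2F x)) (at x)" and cF: "continuous_on UNIV D2F"
    using manX unfolding C2_defining_map_def C2_map_def by blast
  obtain DG D2G where dG: "\<And>x. (G has_derivative blinfun_apply (DG x)) (at x)"
    and dDG: "\<And>x. (DG has_derivative blinfun_apply (D2G x)) (at x)" and cG: "continuous_on UNIV D2G"
    using manY unfolding C2_defining_map_def C2_map_def by blast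
  have fdF: "frechet_derivative F (at x) = blinfun_apply (DF x)" for x
    using frechet_derivative_at[OF dF] by simp
  have fdG: "frechet_derivative G (at x) = blinfun_apply (DG x)" for x
    using frechet_derivative_at[OF dG] by simp
  have zX: "z \<in> X" and sF: "surj (blinfun_apply (DF z))" and F0X: "F -` {0} \<subseteq> X"
    using manX unfolding C2_defining_map_def fdF by auto
  obtain UF where UF: "open UF" "z \<in> UF" "X \<inter> UF \<subseteq> F -` {0}"
    using manX unfolding C2_defining_map_def by auto
  have zY: "z \<in> Y" and sG: "surj (blinfun_apply (DG z))" and G0Y: "G -` {0} \<subseteq> Y"
    using manY unfolding C2_defining_map_def fdG by auto
  obtain UG where UG: "open UG" "z \<in> UG" "Y \<inter> UG \<subseteq> G -` {0}"
    using manY unfolding C2_defining_map_def by auto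
  have Fz: "F z = 0" using zX UF by auto
  have Gz: "G z = 0" using zY UG by auto
  have tang: "tangent_space F x = {v. blinfun_apply (DF x) v = 0}" for x
    by (simp add: tangent_space_def fdF)
  have tr: "orthogonal_comp {v. blinfun_apply (DG z) v = 0} \<inter> orthogonal_comp {v. blinfun_apply (DF z) v = 0} = {0}"
    using transv by (auto simp: normal_space_def tangent_space_def fdF fdG)
  let ?M = "\<lambda>v. (blinfun_apply (DG z) v, blinfun_apply (DF z) v)"
  have sM: "surj ?M" by (rule msurj[OF sG sF tr])
  obtain e where e: "e > 0" "X \<inter> Y \<inter> ball z e = {z}" using isol by blast
  have iM: "inj ?M"
  proof (rule minj[OF dF dG sM Fz Gz _ e(1)])
    fix x assume "x \<in> ball z e" "F x = 0" "G x = 0"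
    then have "x \<in> X \<inter> Y \<inter> ball z e" using F0X G0Y by auto
    then show "x = z" using e(2) by blast
  qed
  have lM: "linear ?M" by (intro bounded_linear.linear bounded_linear_Pair blinfun.bounded_linear_right)
  obtain m0 where m0: "m0 > 0" "\<And>v. m0 * norm v \<le> norm (?M v)"
    using linear_inj_bounded_below_pos[OF lM iM] by blast
  obtain BF where BF: "BF \<ge> 0" "\<And>a b. a \<in> cball z 1 \<Longrightarrow> b \<in> cball z 1 \<Longrightarrow> norm (DF a - DF b) \<le> BF * norm (a - b)"
    using blin_lip[OF dDF cF] by blast
  obtain BG where BG: "BG \<ge> 0" "\<And>a b. a \<in> cball z 1 \<Longrightarrow> b \<in> cball z 1 \<Longrightarrow> norm (DG a - DG b) \<le> BG * norm (a - b)"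
    using blin_lip[OF dDG cG] by blast
  obtain r0 where r0: "r0 > 0" "ball z r0 \<subseteq> UF \<inter> UG"
    using openE[of "UF \<inter> UG" z] UF UG by blast
  define r where "r = min (min r0 1) (m0 / (2 * (BF + BG + 1)))"
  have r: "r > 0" "r \<le> 1" "ball z r \<subseteq> UF \<inter> UG"
    using r0 m0 BF BG by (auto simp: r_def)
  have rb: "(BG + BF) * r \<le> m0/2"
  proof -
    have "r \<le> m0 / (2 * (BF + BG + 1))" by (simp add: r_def)
    then have "(BF + BG + 1) * r \<le> m0 / 2" using BF BG by (simp add: field_simps)
    moreover have "(BG + BF) * r \<le> (BF + BG + 1) * r" using r(1) by (simp add: mult_right_mono)
    ultimately show ?thesis by linarith
  qed
  have lower: "m0/2 * norm (y1 - y2) \<le> norm (G y1 - G y2) + norm (blinfun_apply (DF x) (y1 - y2))"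
    if x: "x \<in> ball z r" and y1: "y1 \<in> ball z r" and y2: "y2 \<in> ball z r" for x y1 y2
  proof -
    define v where "v = y1 - y2"
    have 1: "m0 * norm v \<le> norm (blinfun_apply (DG z) v) + norm (blinfun_apply (DF z) v)"
      using m0(2)[of v] norm_Pair_le[of "blinfun_apply (DG z) v" "blinfun_apply (DF z) v"] by linarith
    have 2: "norm (blinfun_apply (DG z) v) \<le> norm (G y1 - G y2) + norm v * (BG * r)"
    proof -
      have "norm (blinfun_apply (DG z) v) \<le> norm (G y1 - G y2) + norm (G y1 - G y2 - blinfun_apply (DG z) v)"
        using norm_triangle_ineq4[of "G y1 - G y2" "G y1 - G y2 - blinfun_apply (DG z) v"] by simp
      then show ?thesis using lin_at_z[OF dG BG(2) BG(1) r(2) y1 y2] unfolding v_def by linarith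
    qed
    have 3: "norm (blinfun_apply (DF z) v) \<le> norm (blinfun_apply (DF x) v) + norm v * (BF * r)"
    proof -
      have "blinfun_apply (DF z) v = blinfun_apply (DF x) v + blinfun_apply (DF z - DF x) v"
        by (simp add: blinfun.diff_left)
      then have "norm (blinfun_apply (DF z) v) \<le> norm (blinfun_apply (DF x) v) + norm (blinfun_apply (DF z - DF x) v)"
        by (metis norm_triangle_ineq)
      moreover have "norm (blinfun_apply (DF z - DF x) v) \<le> norm (DF z - DF x) * norm v"
        by (rule norm_blinfun)
      moreover have "norm (DF z - DF x) \<le> BF * norm (z - x)"
        using BF(2)[of z x] x r(2) by auto
      moreover have "BF * norm (z - x) \<le> BF * r"
        using x BF(1) by (simp add: dist_norm mult_left_mono)
      ultimately have "norm (DF z - DF x) \<le> BF * r" by linarith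
      then have "norm (DF z - DF x) * norm v \<le> BF * r * norm v" by (rule mult_right_mono) simp
      then show ?thesis using \<open>norm (blinfun_apply (DF z) v) \<le> _\<close> \<open>norm (blinfun_apply (DF z - DF x) v) \<le> _\<close>
        by (simp add: mult_ac)
    qed
    have "norm v * ((BG + BF) * r) \<le> norm v * (m0/2)" by (rule mult_left_mono[OF rb norm_ge_zero])
    then show ?thesis using 1 2 3 unfolding v_def[symmetric] by (simp add: algebra_simps)
  qed
  have taylorx: "norm (blinfun_apply (DF x) (z - x)) \<le> BF * (norm (x - z))\<^sup>2"
    if "x \<in> ball z r" "F x = 0" for x
  proof -
    have xc: "x \<in> cball z 1" using that(1) r(2) by (simp add: dist_commute)
    note tt = taylor2[OF dF BF(2) BF(1) xc]
    then have "norm (F z - F x - blinfun_apply (DF x) (z - x)) \<le> BF * (norm (x - z))\<^sup>2"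
      by simp
    then show ?thesis using Fz that(2) by simp
  qed
  define K where "K = 2 * BF / m0"
  have K0: "K \<ge> 0" using BF m0 by (simp add: K_def)
  have quad: "norm (y - z) \<le> K * (norm (x - z))\<^sup>2"
    if x: "x \<in> X" "x \<in> ball z r" and y: "y \<in> Y" "y \<in> ball z r" and t: "blinfun_apply (DF x) (y - x) = 0" for x y
  proof -
    have Fx: "F x = 0" using x r(3) UF by auto
    have Gy: "G y = 0" using y r(3) UG by auto
    have zr: "z \<in> ball z r" using r by simp
    have "blinfun_apply (DF x) (y - z) = blinfun_apply (DF x) ((y - x) - (z - x))" by simp
    also have "\<dots> = blinfun_apply (DF x) (y - x) - blinfun_apply (DF x) (z - x)" by (rule blinfun.diff_right)
    also have "\<dots> = - blinfun_apply (DF x) (z - x)" using t by simp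
    finally have "norm (blinfun_apply (DF x) (y - z)) = norm (blinfun_apply (DF x) (z - x))" by simp
    then have "m0/2 * norm (y - z) \<le> BF * (norm (x - z))\<^sup>2"
      using lower[OF x(2) y(2) zr] Gy Gz taylorx[OF x(2) Fx] by simp
    then show ?thesis using m0 by (simp add: K_def field_simps)
  qed
  have uniq: "y1 = y2"
    if x: "x \<in> ball z r" and y1: "y1 \<in> Y" "y1 \<in> ball z r" "blinfun_apply (DF x) (y1 - x) = 0"
      and y2: "y2 \<in> Y" "y2 \<in> ball z r" "blinfun_apply (DF x) (y2 - x) = 0" for x y1 y2
  proof -
    have "G y1 = 0" "G y2 = 0" using y1 y2 r(3) UG by auto
    moreover have "blinfun_apply (DF x) (y1 - y2) = 0"
    proof -
      have "blinfun_apply (DF x) (y1 - y2) = blinfun_apply (DF x) ((y1 - x) - (y2 - x))" by simp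
      also have "\<dots> = blinfun_apply (DF x) (y1 - x) - blinfun_apply (DF x) (y2 - x)" by (rule blinfun.diff_right)
      also have "\<dots> = 0" using y1(3) y2(3) by simp
      finally show ?thesis .
    qed
    ultimately have "m0/2 * norm (y1 - y2) \<le> 0" using lower[OF x y1(2) y2(2)] by simp
    then show ?thesis using m0 by (simp add: mult_le_0_iff)
  qed
  define H where "H p = (fst p, G (snd p), blinfun_apply (DF (fst p)) (snd p - fst p))" for p :: "'a \<times> 'a"
  have dH: "(H has_derivative (\<lambda>h. (fst h, blinfun_apply (DG (snd p)) (snd h), blinfun_apply (DF (fst p)) (snd h - fst h) + blinfun_apply (blinfun_apply (D2F (fst p)) (fst h)) (snd p - fst p)))) (at p)" for p
    unfolding H_def[abs_def] by (rule dH_lemma[OF dG dDF])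
  have cH: "continuous_on UNIV H"
    by (meson continuous_at_imp_continuous_on dH has_derivative_continuous)
  have sH: "surj (\<lambda>h. (fst h, blinfun_apply (DG (snd (z,z))) (snd h), blinfun_apply (DF (fst (z,z))) (snd h - fst h) + blinfun_apply (blinfun_apply (D2F (fst (z,z))) (fst h)) (snd (z,z) - fst (z,z))))"
  proof -
    have ex: "\<exists>h. (a, b, c) = (fst h, blinfun_apply (DG z) (snd h), blinfun_apply (DF z) (snd h - fst h) + blinfun_apply (blinfun_apply (D2F z) (fst h)) (z - z))" for a b c
    proof -
      obtain hh where hh: "(b, c + blinfun_apply (DF z) a) = ?M hh"
        using surjD[OF sM, of "(b, c + blinfun_apply (DF z) a)"] by blast
      have h1: "b = blinfun_apply (DG z) hh" and h2: "c + blinfun_apply (DF z) a = blinfun_apply (DF z) hh"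
        using hh by simp_all
      have "blinfun_apply (DF z) (hh - a) = blinfun_apply (DF z) hh - blinfun_apply (DF z) a"
        by (rule blinfun.diff_right)
      also have "\<dots> = c" unfolding h2[symmetric] by simp
      finally have e1: "blinfun_apply (DG z) hh = b" "blinfun_apply (DF z) (hh - a) = c"
        using h1 by simp_all
      show ?thesis using e1 by (intro exI[of _ "(a, hh)"]) (simp add: blinfun.zero_right)
    qed
    show ?thesis unfolding surj_def
    proof
      fix y :: "'a \<times> 'n \<times> 'm"
      obtain a b c where y: "y = (a, b, c)" by (cases y) auto
      show "\<exists>h. y = (fst h, blinfun_apply (DG (snd (z, z))) (snd h), blinfun_apply (DF (fst (z, z))) (snd h - fst h) + blinfun_apply (blinfun_apply (D2F (fst (z, z))) (fst h)) (snd (z, z) - fst (z, z)))"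
        unfolding y fst_conv snd_conv by (rule ex)
    qed
  qed
  obtain \<eta> where \<eta>: "\<eta> > 0" "ball (H (z,z)) \<eta> \<subseteq> H ` ball (z,z) r"
    using open_map_pt[OF cH dH sH r(1)] by blast
  have Hz: "H (z,z) = (z, 0, 0)" by (simp add: H_def Gz)
  have exist: "\<exists>y. y \<in> Y \<and> y \<in> ball z r \<and> blinfun_apply (DF x) (y - x) = 0" if x: "x \<in> ball z \<eta>" for x
  proof -
    have "(x, 0, 0) \<in> ball (H (z,z)) \<eta>" using x by (simp add: Hz dist_Pair_Pair dist_commute)
    then have mem: "(x, 0, 0) \<in> H ` ball (z,z) r" by (rule subsetD[OF \<eta>(2)])
    obtain p where p: "(x, 0, 0) = H p" "p \<in> ball (z,z) r" using mem by (rule imageE)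
    obtain p1 p2 where pp: "p = (p1, p2)" by (cases p)
    have hp: "x = p1" "0 = G p2" "0 = blinfun_apply (DF p1) (p2 - p1)" using p(1) by (simp_all add: H_def pp)
    have "dist (snd (z,z)) (snd p) \<le> dist (z,z) p" by (rule dist_snd_le)
    then have "dist z p2 < r" using p(2) by (simp add: pp)
    moreover have "p2 \<in> Y" using G0Y hp(2) by auto
    ultimately show ?thesis using hp by (intro exI[of _ p2]) simp
  qed
  define r1 where "r1 = min (min r \<eta>) (1 / (K + 1))"
  have r1a: "r1 > 0" using r(1) \<eta>(1) K0 by (simp add: r1_def)
  have r1b: "r1 \<le> r" "r1 \<le> \<eta>" "r1 \<le> 1 / (K + 1)" by (simp_all add: r1_def)
  have "(K + 1) * r1 \<le> 1" using r1b(3) K0 by (simp add: field_simps)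
  then have r1c: "K * r1 \<le> 1" using r1a by (simp add: algebra_simps)
  note r1 = r1a r1b(1,2) r1c
  define W where "W = ball z r1"
  have img: "y \<in> (\<lambda>v. x + v) ` tangent_space F x \<longleftrightarrow> blinfun_apply (DF x) (y - x) = 0" for x y
  proof
    assume "y \<in> (\<lambda>v. x + v) ` tangent_space F x"
    then show "blinfun_apply (DF x) (y - x) = 0" by (auto simp: tang)
  next
    assume "blinfun_apply (DF x) (y - x) = 0"
    then have "y - x \<in> tangent_space F x" by (simp add: tang)
    then show "y \<in> (\<lambda>v. x + v) ` tangent_space F x" by (rule rev_image_eqI) simp
  qed
  have Wsub: "W \<subseteq> ball z r" using r1 by (auto simp: W_def)
  have EU: "\<exists>!y. y \<in> Y \<inter> W \<and> y \<in> (\<lambda>v. x + v) ` tangent_space F x" if x: "x \<in> X \<inter> W" for x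
  proof -
    have xr: "x \<in> ball z r" and xe: "x \<in> ball z \<eta>" using x r1 by (auto simp: W_def)
    obtain y where y: "y \<in> Y" "y \<in> ball z r" "blinfun_apply (DF x) (y - x) = 0"
      using exist[OF xe] by blast
    have q: "norm (y - z) \<le> K * (norm (x - z))\<^sup>2" using quad[of x y] x xr y by auto
    have nx: "norm (x - z) < r1" using x by (simp add: W_def dist_norm norm_minus_commute)
    have "K * (norm (x - z))\<^sup>2 \<le> K * r1 * norm (x - z)"
      using nx K0 by (simp add: power2_eq_square mult_left_mono mult_right_mono mult.assoc)
    also have "\<dots> \<le> norm (x - z)" using mult_right_mono[OF r1(4) norm_ge_zero[of "x - z"]] by simp
    finally have "norm (y - z) < r1" using q nx by linarith
    then have yW: "y \<in> W" by (simp add: W_def dist_norm norm_minus_commute)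
    show ?thesis
    proof (rule ex1I[of _ y])
      have "y \<in> (\<lambda>v. x + v) ` tangent_space F x" using img[of y x] y(3) by simp
      then show "y \<in> Y \<inter> W \<and> y \<in> (\<lambda>v. x + v) ` tangent_space F x" using y(1) yW by simp
      fix y' assume a: "y' \<in> Y \<inter> W \<and> y' \<in> (\<lambda>v. x + v) ` tangent_space F x"
      then have "y' \<in> Y" "y' \<in> ball z r" "blinfun_apply (DF x) (y' - x) = 0"
        using Wsub img[of y' x] by auto
      then show "y' = y" using uniq[OF xr _ _ _ y] by simp
    qed
  qed
  define yW where "yW = (\<lambda>x. THE y. y \<in> Y \<inter> W \<and> y \<in> (\<lambda>v. x + v) ` tangent_space F x)"
  have yWp: "yW x \<in> Y \<and> yW x \<in> W \<and> norm (yW x - z) \<le> K * (norm (x - z))\<^sup>2" if x: "x \<in> X \<inter> W" for x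
  proof -
    have "yW x \<in> Y \<inter> W \<and> yW x \<in> (\<lambda>v. x + v) ` tangent_space F x"
      unfolding yW_def using theI'[OF EU[OF x]] by simp
    then have a: "yW x \<in> Y" "yW x \<in> W" "blinfun_apply (DF x) (yW x - x) = 0"
      using img[of "yW x" x] by auto
    have b: "x \<in> ball z r" "yW x \<in> ball z r" using x a(2) Wsub by auto
    show ?thesis using quad[OF _ b(1) a(1) b(2) a(3)] x a by simp
  qed
  define C where "C = L * K"
  have L0: "L \<ge> 0" using Rlip by (simp add: lipschitz_on_def)
  have C0: "C \<ge> 0" using L0 K0 by (simp add: C_def)
  have step: "R (yW x) \<in> X \<and> norm (R (yW x) - z) \<le> C * (norm (x - z))\<^sup>2" if x: "x \<in> X \<inter> W" for x
  proof -
    have "dist (R (yW x)) (R z) \<le> L * dist (yW x) z"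
      using lipschitz_onD[OF Rlip] yWp[OF x] zY by blast
    then have "norm (R (yW x) - z) \<le> L * norm (yW x - z)" using Rz by (simp add: dist_norm)
    also have "\<dots> \<le> L * (K * (norm (x - z))\<^sup>2)" using yWp[OF x] L0 by (simp add: mult_left_mono)
    finally show ?thesis using RY yWp[OF x] by (auto simp: C_def mult.assoc)
  qed
  define \<delta> where "\<delta> = min r1 (1 / (2 * C + 1))"
  have \<delta>a: "\<delta> > 0" using r1(1) C0 by (simp add: \<delta>_def)
  have \<delta>b: "\<delta> \<le> r1" "\<delta> \<le> 1 / (2 * C + 1)" by (simp_all add: \<delta>_def)
  have "(2 * C + 1) * \<delta> \<le> 1" using \<delta>b(2) C0 by (simp add: field_simps)
  then have \<delta>c: "C * \<delta> \<le> 1/2" using \<delta>a by (simp add: algebra_simps)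
  note \<delta> = \<delta>a \<delta>b(1) \<delta>c
  have main: "\<exists>\<delta>>0. \<exists>C. \<forall>x0 \<in> X \<inter> ball z \<delta>.
                 let s = (\<lambda>k. ((\<lambda>x. R (yW x)) ^^ k) x0) in
                 (\<forall>k. s k \<in> X \<inter> W) \<and> s \<longlonglongrightarrow> z \<and>
                 (\<forall>k. norm (s (Suc k) - z) \<le> C * (norm (s k - z))\<^sup>2)"
  proof (rule exI[of _ \<delta>], intro conjI \<delta>(1) exI[of _ C] ballI)
    fix x0 assume x0: "x0 \<in> X \<inter> ball z \<delta>"
    define s where "s = (\<lambda>k. ((\<lambda>x. R (yW x)) ^^ k) x0)"
    have sS: "s (Suc k) = R (yW (s k))" for k by (simp add: s_def)
    have inv: "s k \<in> X \<and> norm (s k - z) < \<delta> \<and> norm (s k - z) \<le> (1/2)^k * norm (x0 - z)" for k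
    proof (induction k)
      case 0
      then show ?case using x0 by (simp add: s_def dist_norm norm_minus_commute)
    next
      case (Suc k)
      have xW: "s k \<in> X \<inter> W" using Suc \<delta> by (auto simp: W_def dist_norm norm_minus_commute)
      have st: "norm (s (Suc k) - z) \<le> C * (norm (s k - z))\<^sup>2" "s (Suc k) \<in> X"
        using step[OF xW] by (simp_all add: sS)
      have "C * (norm (s k - z))\<^sup>2 \<le> C * \<delta> * norm (s k - z)"
        using Suc C0 by (simp add: power2_eq_square mult_left_mono mult_right_mono mult.assoc less_imp_le)
      also have "\<dots> \<le> 1/2 * norm (s k - z)" by (rule mult_right_mono[OF \<delta>(3) norm_ge_zero])
      finally have h: "norm (s (Suc k) - z) \<le> 1/2 * norm (s k - z)" using st by linarith
      show ?case
      proof (intro conjI)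
        show "s (Suc k) \<in> X" by (rule st(2))
        show "norm (s (Suc k) - z) < \<delta>" using h Suc norm_ge_zero[of "s k - z"] by linarith
        have eq: "(1/2::real)^Suc k * norm (x0 - z) = 1/2 * ((1/2)^k * norm (x0 - z))" by simp
        have "1/2 * norm (s k - z) \<le> 1/2 * ((1/2)^k * norm (x0 - z))" using Suc by simp
        then show "norm (s (Suc k) - z) \<le> (1/2)^Suc k * norm (x0 - z)" using h eq by linarith
      qed
    qed
    have P1: "\<forall>k. s k \<in> X \<inter> W"
    proof
      fix k
      have "s k \<in> X" "norm (s k - z) < \<delta>" using inv[of k] by simp_all
      then show "s k \<in> X \<inter> W" using \<delta>(2) by (simp add: W_def dist_norm norm_minus_commute)
    qed
    have P2: "s \<longlonglongrightarrow> z"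
    proof -
      have "(\<lambda>k. (1/2::real)^k * norm (x0 - z)) \<longlonglongrightarrow> 0"
        by (intro tendsto_mult_left_zero LIMSEQ_power_zero) simp
      then have "(\<lambda>k. s k - z) \<longlonglongrightarrow> 0"
        by (rule Lim_null_comparison[rotated]) (use inv in \<open>auto intro: always_eventually\<close>)
      then show ?thesis by (simp add: LIM_zero_iff)
    qed
    have P3: "\<forall>k. norm (s (Suc k) - z) \<le> C * (norm (s k - z))\<^sup>2"
      using step P1 sS by auto
    have "(\<forall>k. s k \<in> X \<inter> W) \<and> s \<longlonglongrightarrow> z \<and> (\<forall>k. norm (s (Suc k) - z) \<le> C * (norm (s k - z))\<^sup>2)"
      using P1 P2 P3 by blast
    then show "let s = (\<lambda>k. ((\<lambda>x. R (yW x)) ^^ k) x0) in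
                 (\<forall>k. s k \<in> X \<inter> W) \<and> s \<longlonglongrightarrow> z \<and>
                 (\<forall>k. norm (s (Suc k) - z) \<le> C * (norm (s k - z))\<^sup>2)"
      unfolding s_def Let_def by blast
  qed
  show ?thesis
  proof (intro exI[of _ W] conjI ballI)
    show "open W" by (simp add: W_def)
    show "z \<in> W" using r1 by (simp add: W_def)
    show "\<exists>!y. y \<in> Y \<inter> W \<and> y \<in> (\<lambda>v. x + v) ` tangent_space F x" if "x \<in> X \<inter> W" for x
      using EU that by blast
    show "let yW = (\<lambda>x. THE y. y \<in> Y \<inter> W \<and> y \<in> (\<lambda>v. x + v) ` tangent_space F x)
            in \<exists>\<delta>>0. \<exists>C. \<forall>x0 \<in> X \<inter> ball z \<delta>.
                 let s = (\<lambda>k. ((\<lambda>x. R (yW x)) ^^ k) x0) in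
                 (\<forall>k. s k \<in> X \<inter> W) \<and> s \<longlonglongrightarrow> z \<and>
                 (\<forall>k. norm (s (Suc k) - z) \<le> C * (norm (s k - z))\<^sup>2)"
      using main unfolding yW_def Let_def .
  qed
qed

end
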